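(* Let $D$ be a dataset, $\Omega=\{\omega_1,\dots,\omega_k\}$ a finite set of outcomes, $q$ a real-valued quality function with sensitivity $\Delta>0$, and $\varepsilon>0$; let $q_*=\max_i q(D,\omega_i)$. Then the output distributions of Intermediate Algorithm A and Intermediate Algorithm B (defined below) on these inputs are the same.
   Context: $\mathrm{Expo}(\lambda)$ denotes the exponential distribution with rate $\lambda$, density $\lambda e^{-\lambda x}\mathbf{1}[x\ge0]$. Intermediate Algorithm A: compute $q_*$; for each $i=1,\dots,k$ independently set $v_i=q(D,\omega_i)+X_i$ with $X_i\sim\mathrm{Expo}(\varepsilon/(2\Delta))$; let $S=\{i: v_i\ge q_*\}$; return an element of $S$ chosen uniformly at random. Intermediate Algorithm B: compute $q_*$; for each $i=1,\dots,k$ independently set $v_i^\top=\min\{q_*,\,q(D,\omega_i)+X_i\}$ with $X_i\sim\mathrm{Expo}(\varepsilon/(2\Delta))$ and draw $z_i\sim\mathrm{Expo}(\varepsilon/(2\Delta))$ (all these random variables independent); let $S'=\{i: v_i^\top=q_*\}$; return $\arg\max_{i\in S'}(v_i^\top+z_i)$ (ties occur with probability zero). *)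

theory Defs
  imports "HOL-Probability.Probability"
begin

definition expo :: "real \<Rightarrow> real measure" where
  "expo l = density lborel (exponential_density l)"

definition qstar :: "('d \<Rightarrow> 'o \<Rightarrow> real) \<Rightarrow> 'd \<Rightarrow> (nat \<Rightarrow> 'o) \<Rightarrow> nat \<Rightarrow> real" where
  "qstar q D omega k = Max ((\<lambda>i. q D (omega i)) ` {..<k})"

definition alg_A :: "('d \<Rightarrow> 'o \<Rightarrow> real) \<Rightarrow> 'd \<Rightarrow> (nat \<Rightarrow> 'o) \<Rightarrow> nat \<Rightarrow> real \<Rightarrow> real \<Rightarrow> 'o measure" where
  "alg_A q D omega k Delta eps =
     (PiM {..<k} (\<lambda>_. expo (eps / (2 * Delta)))) \<bind>
     (\<lambda>X. let S = {i \<in> {..<k}. q D (omega i) + X i \<ge> qstar q D omega k}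
          in distr (uniform_measure (count_space UNIV) S) (count_space UNIV) omega)"

definition alg_B :: "('d \<Rightarrow> 'o \<Rightarrow> real) \<Rightarrow> 'd \<Rightarrow> (nat \<Rightarrow> 'o) \<Rightarrow> nat \<Rightarrow> real \<Rightarrow> real \<Rightarrow> 'o measure" where
  "alg_B q D omega k Delta eps =
     distr (PiM {..<k} (\<lambda>_. expo (eps / (2 * Delta))) \<Otimes>\<^sub>M PiM {..<k} (\<lambda>_. expo (eps / (2 * Delta))))
       (count_space UNIV)
       (\<lambda>(X, z). let qs = qstar q D omega k;
                     v = (\<lambda>i. min qs (q D (omega i) + X i));
                     S' = {i \<in> {..<k}. v i = qs}
                 in omega (arg_max_on (\<lambda>i. v i + z i) S'))"

end

theory Submission
  imports Defs
begin

lemma expo_prob: "l > 0 \<Longrightarrow> prob_space (expo l)"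
  unfolding expo_def by (rule prob_space_exponential_density)

lemma expo_singleton: "l > 0 \<Longrightarrow> emeasure (expo l) {c} = 0"
proof -
  assume l: "l > 0"
  have "{c} \<in> null_sets (expo l)"
    unfolding expo_def
  proof (subst null_sets_density_iff)
    show "(\<lambda>x. ennreal (exponential_density l x)) \<in> borel_measurable lborel" by measurable
    have "AE x in lborel. x \<in> {c} \<longrightarrow> ennreal (exponential_density l x) = 0"
      using AE_lborel_singleton[of c] by (rule eventually_mono) auto
    then show "{c} \<in> sets lborel \<and> (AE x in lborel. x \<in> {c} \<longrightarrow> ennreal (exponential_density l x) = 0)"
      by simp
  qed
  then show ?thesis by auto
qed

lemma expo_AE_nonneg: "l > 0 \<Longrightarrow> AE x in expo l. 0 \<le> x"
  unfolding expo_def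
  by (subst AE_density) (auto simp: exponential_density_def)

lemma arg_max_on_SOME:
  fixes f :: "'a \<Rightarrow> 'b::linorder"
  shows "arg_max_on f S = (SOME x. x \<in> {x\<in>S. \<forall>y\<in>S. f y \<le> f x})"
  by (simp add: arg_max_on_def arg_max_def is_arg_max_def not_less Ball_def)

lemma exists_max:
  fixes f :: "'a \<Rightarrow> 'b::linorder"
  assumes "finite T" "T \<noteq> {}" shows "\<exists>m\<in>T. \<forall>y\<in>T. f y \<le> f m"
proof -
  have "Max (f ` T) \<in> f ` T" using assms by simp
  then obtain m where m: "m \<in> T" "f m = Max (f ` T)" by auto
  then show ?thesis using assms by (auto intro!: bexI[of _ m])
qed

lemma arg_max_on_in:
  fixes f :: "'a \<Rightarrow> 'b::linorder"
  assumes "finite T" "T \<noteq> {}" shows "arg_max_on f T \<in> T"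
proof -
  obtain m where "m \<in> T" "\<forall>y\<in>T. f y \<le> f m" using exists_max[OF assms, of f] by blast
  then have "m \<in> {x\<in>T. \<forall>y\<in>T. f y \<le> f x}" by simp
  then have "(SOME x. x \<in> {x\<in>T. \<forall>y\<in>T. f y \<le> f x}) \<in> {x\<in>T. \<forall>y\<in>T. f y \<le> f x}" by (rule someI)
  then show ?thesis unfolding arg_max_on_SOME by simp
qed

lemma arg_max_on_max:
  fixes f :: "'a \<Rightarrow> 'b::linorder"
  assumes "finite T" "T \<noteq> {}" "y \<in> T" shows "f y \<le> f (arg_max_on f T)"
proof -
  obtain m where "m \<in> T" "\<forall>y\<in>T. f y \<le> f m" using exists_max[OF assms(1,2), of f] by blast
  then have "m \<in> {x\<in>T. \<forall>y\<in>T. f y \<le> f x}" by simp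
  then have "(SOME x. x \<in> {x\<in>T. \<forall>y\<in>T. f y \<le> f x}) \<in> {x\<in>T. \<forall>y\<in>T. f y \<le> f x}" by (rule someI)
  then show ?thesis unfolding arg_max_on_SOME using assms(3) by simp
qed

lemma arg_max_on_unique:
  fixes f :: "'a \<Rightarrow> 'b::linorder"
  assumes "m \<in> T" "\<forall>y\<in>T. f y \<le> f m" "inj_on f T" shows "arg_max_on f T = m"
  unfolding arg_max_on_SOME
proof (rule some_equality)
  show "m \<in> {x \<in> T. \<forall>y\<in>T. f y \<le> f x}" using assms by auto
  fix x assume "x \<in> {x \<in> T. \<forall>y\<in>T. f y \<le> f x}"
  then have "x \<in> T" "f x = f m" using assms by (auto intro: order.antisym)
  then show "x = m" using assms by (auto dest: inj_onD)
qed

lemma arg_max_on_cong: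
  "(\<And>x. x \<in> S \<Longrightarrow> f x = g x) \<Longrightarrow> arg_max_on f S = arg_max_on g S"
proof -
  assume fg: "\<And>x. x \<in> S \<Longrightarrow> f x = g x"
  have "is_arg_max f (\<lambda>x. x \<in> S) = is_arg_max g (\<lambda>x. x \<in> S)"
    using fg by (auto simp: is_arg_max_def fun_eq_iff)
  then show ?thesis by (simp add: arg_max_on_def arg_max_def)
qed

lemma meas_finite_set:
  assumes "finite K" "\<And>x. x \<in> space N \<Longrightarrow> G x \<subseteq> K"
    "\<And>i. i \<in> K \<Longrightarrow> {x\<in>space N. i \<in> G x} \<in> sets N"
  shows "G \<in> measurable N (count_space (Pow K))"
proof -
  have pi: "Measurable.pred N (\<lambda>x. i \<in> G x)" if "i \<in> K" for i
    using assms(3)[OF that] by (simp add: pred_def)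
  have "G -` {a} \<inter> space N \<in> sets N" if a: "a \<subseteq> K" for a
  proof -
    have eqG: "G x = a" if x: "x \<in> space N" "\<forall>i\<in>K. (i \<in> G x \<longleftrightarrow> i \<in> a)" for x
      using assms(2)[OF x(1)] a x(2) by blast
    have "G -` {a} \<inter> space N = {x\<in>space N. \<forall>i\<in>K. (i \<in> G x \<longleftrightarrow> i \<in> a)}"
      using eqG by blast
    also have "\<dots> \<in> sets N"
    proof (rule predE, rule pred_intros_finite(3)[OF assms(1)])
      fix i assume i: "i \<in> K"
      show "Measurable.pred N (\<lambda>x. (i \<in> G x \<longleftrightarrow> i \<in> a))"
        by (cases "i \<in> a") (simp_all add: pi[OF i] pred_intros_logic(2))
    qed
    finally show ?thesis .
  qed
  moreover have "G \<in> space N \<rightarrow> Pow K" using assms(2) by blast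
  ultimately show ?thesis using assms(1) by (subst measurable_count_space_eq2) blast+
qed



context fixes l :: real and n :: nat assumes l: "0 < l" begin

abbreviation "PP \<equiv> PiM {..<n} (\<lambda>_. expo l)"

lemma PP_prob: "prob_space PP"
  by (intro prob_space_PiM expo_prob l)

lemma sp_expo[simp]: "space (expo l) = UNIV" by (simp add: expo_def)
lemma sets_expo[simp]: "sets (expo l) = sets borel" by (simp add: expo_def)

lemma comp_meas: "i < n \<Longrightarrow> (\<lambda>z. z i) \<in> borel_measurable PP"
proof -
  assume "i < n"
  then have "(\<lambda>z. z i) \<in> measurable PP (expo l)" by (intro measurable_component_singleton) simp
  then show ?thesis by (subst (asm) measurable_cong_sets[OF refl sets_expo])
qed

lemma test1: "y < n \<Longrightarrow> x < n \<Longrightarrow> {z\<in>space PP. z y \<le> z x} \<in> sets PP"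
  by (intro borel_measurable_le comp_meas)

lemma ties:
  assumes ij: "i < n" "j < n" "i \<noteq> j"
  shows "{z\<in>space PP. z i = z j} \<in> null_sets PP"
proof -
  define I where "I = {..<n} - {i}"
  have ins: "insert i I = {..<n}" using ij by (auto simp: I_def)
  let ?E = "expo l" and ?Q = "PiM I (\<lambda>_. expo l)"
  let ?Phi = "\<lambda>(x::real, X::nat\<Rightarrow>real). X(i:=x)"
  have eq: "distr (?E \<Otimes>\<^sub>M ?Q) (PiM (insert i I) (\<lambda>_. ?E)) ?Phi = PiM (insert i I) (\<lambda>_. ?E)"
    by (rule distr_pair_PiM_eq_PiM) (simp_all add: expo_prob l)
  define B where "B = {z\<in>space PP. z i = z j}"
  have B: "B \<in> sets PP" unfolding B_def using ij by (intro borel_measurable_eq comp_meas)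
  have Phim: "?Phi \<in> measurable (?E \<Otimes>\<^sub>M ?Q) PP"
  proof -
    have "(\<lambda>p. (snd p)(i := fst p)) \<in> measurable (?E \<Otimes>\<^sub>M ?Q) PP"
      by (rule measurable_fun_upd[OF _ measurable_snd measurable_fst]) (use ij in \<open>auto simp: I_def\<close>)
    then show ?thesis by (simp add: case_prod_beta')
  qed
  interpret Q: prob_space ?Q by (intro prob_space_PiM expo_prob l)
  interpret E: prob_space ?E by (intro expo_prob l)
  interpret EQ: pair_sigma_finite ?E ?Q by unfold_locales
  have eq': "distr (?E \<Otimes>\<^sub>M ?Q) PP ?Phi = PP" using eq unfolding ins .
  have "emeasure PP B = emeasure (distr (?E \<Otimes>\<^sub>M ?Q) PP ?Phi) B"
    by (simp only: eq')
  also have "\<dots> = emeasure (?E \<Otimes>\<^sub>M ?Q) (?Phi -` B \<inter> space (?E \<Otimes>\<^sub>M ?Q))"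
    by (rule emeasure_distr[OF Phim B])
  also have "\<dots> = \<integral>\<^sup>+X. emeasure ?E ((\<lambda>x. (x, X)) -` (?Phi -` B \<inter> space (?E \<Otimes>\<^sub>M ?Q))) \<partial>?Q"
    using Phim B by (intro EQ.emeasure_pair_measure_alt2) (rule measurable_sets)
  also have "\<dots> = \<integral>\<^sup>+X. 0 \<partial>?Q"
  proof (rule nn_integral_cong)
    fix X assume X: "X \<in> space ?Q"
    have "(\<lambda>x. (x, X)) -` (?Phi -` B \<inter> space (?E \<Otimes>\<^sub>M ?Q)) = {X j}"
      using X ij by (auto simp: B_def space_pair_measure space_PiM PiE_iff I_def extensional_def)
    then show "emeasure ?E ((\<lambda>x. (x, X)) -` (?Phi -` B \<inter> space (?E \<Otimes>\<^sub>M ?Q))) = 0"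
      using expo_singleton[OF l] by simp
  qed
  finally have "emeasure PP B = 0" by simp
  with B show ?thesis unfolding B_def[symmetric] by (simp add: null_sets_def)
qed

end


context fixes l :: real and n :: nat assumes l: "0 < l" begin

lemma AE_inj: "AE z in PP l n. \<forall>i\<in>{..<n}. \<forall>j\<in>{..<n}. i \<noteq> j \<longrightarrow> z i \<noteq> z j"
proof (intro AE_finite_allI)
  fix i j assume i: "i \<in> {..<n}" and j: "j \<in> {..<n}"
  show "AE z in PP l n. i \<noteq> j \<longrightarrow> z i \<noteq> z j"
  proof (cases "i = j")
    case False
    show ?thesis
    proof (rule AE_I')
      show "{z\<in>space (PP l n). z i = z j} \<in> null_sets (PP l n)"
        using i j False by (intro ties[OF l]) auto
      show "{z\<in>space (PP l n). \<not> (i \<noteq> j \<longrightarrow> z i \<noteq> z j)} \<subseteq> {z\<in>space (PP l n). z i = z j}"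
        by auto
    qed
  next
    case True then show ?thesis by simp
  qed
qed simp_all

lemma am_meas:
  assumes T: "T \<subseteq> {..<n}"
  shows "(\<lambda>z. arg_max_on z T) \<in> measurable (PP l n) (count_space UNIV)"
proof -
  have fT: "finite T" using T finite_subset by blast
  define G where "G = (\<lambda>z::nat\<Rightarrow>real. {x\<in>T. \<forall>y\<in>T. z y \<le> z x})"
  have G: "G \<in> measurable (PP l n) (count_space (Pow T))"
  proof (rule meas_finite_set[OF fT])
    fix z show "G z \<subseteq> T" by (auto simp: G_def)
  next
    fix i assume i: "i \<in> T"
    have "Measurable.pred (PP l n) (\<lambda>z. \<forall>y\<in>T. z y \<le> z i)"
    proof (rule pred_intros_finite(3)[OF fT])
      fix y assume y: "y \<in> T"
      show "Measurable.pred (PP l n) (\<lambda>z. z y \<le> z i)"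
        unfolding pred_def using y i T by (intro test1[OF l]) auto
    qed
    then have "{z\<in>space (PP l n). \<forall>y\<in>T. z y \<le> z i} \<in> sets (PP l n)" by (rule predE)
    moreover have "{z\<in>space (PP l n). i \<in> G z} = {z\<in>space (PP l n). \<forall>y\<in>T. z y \<le> z i}"
      using i by (auto simp: G_def)
    ultimately show "{z\<in>space (PP l n). i \<in> G z} \<in> sets (PP l n)" by simp
  qed
  have F: "(\<lambda>M. SOME x. x \<in> M) \<in> measurable (count_space (Pow T)) (count_space UNIV)" by simp
  have "(\<lambda>z. (\<lambda>M. SOME x. x \<in> M) (G z)) \<in> measurable (PP l n) (count_space UNIV)"
    by (rule measurable_compose[OF G F])
  moreover have "(\<lambda>z. arg_max_on z T) = (\<lambda>z. (\<lambda>M. SOME x. x \<in> M) (G z))"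
    by (simp add: G_def arg_max_on_SOME)
  ultimately show ?thesis by simp
qed

lemma am_sets:
  "T \<subseteq> {..<n} \<Longrightarrow> {z\<in>space (PP l n). arg_max_on z T = j} \<in> sets (PP l n)"
  using measurable_sets[OF am_meas, of T "{j}"] by (simp add: vimage_def Int_def conj_commute)

lemma am_sym:
  assumes T: "T \<subseteq> {..<n}" and j: "j \<in> T" and j': "j' \<in> T"
  shows "measure (PP l n) {z\<in>space (PP l n). arg_max_on z T = j'} = measure (PP l n) {z\<in>space (PP l n). arg_max_on z T = j}"
proof -
  define s where "s = (\<lambda>i::nat. if i = j then j' else if i = j' then j else i)"
  have ss: "s (s i) = i" for i by (auto simp: s_def)
  have sj: "s j = j'" "s j' = j" by (auto simp: s_def)
  have sT: "s i \<in> T \<longleftrightarrow> i \<in> T" for i using j j' by (auto simp: s_def)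
  have sn: "s i \<in> {..<n}" if "i \<in> {..<n}" for i using that j j' T by (auto simp: s_def)
  have inj: "inj_on s {..<n}" by (metis ss inj_onI)
  define R where "R = (\<lambda>z::nat\<Rightarrow>real. \<lambda>m\<in>{..<n}. z (s m))"
  have Rm: "R \<in> measurable (PP l n) (PP l n)"
    unfolding R_def by (rule measurable_restrict) (rule measurable_component_singleton[OF sn])
  have D: "distr (PP l n) (PP l n) R = PP l n"
    unfolding R_def by (rule distr_PiM_reindex) (use inj sn expo_prob[OF l] in auto)
  let ?A = "\<lambda>j. {z\<in>space (PP l n). arg_max_on z T = j}"
  have "measure (PP l n) (?A j') = measure (distr (PP l n) (PP l n) R) (?A j')" by (simp only: D)
  also have "\<dots> = measure (PP l n) (R -` ?A j' \<inter> space (PP l n))"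
    by (rule measure_distr[OF Rm am_sets[OF T]])
  also have "\<dots> = measure (PP l n) (?A j)"
  proof (rule measure_eq_AE)
    show "R -` ?A j' \<inter> space (PP l n) \<in> sets (PP l n)" by (rule measurable_sets[OF Rm am_sets[OF T]])
    show "?A j \<in> sets (PP l n)" by (rule am_sets[OF T])
    show "AE z in PP l n. z \<in> R -` ?A j' \<inter> space (PP l n) \<longleftrightarrow> z \<in> ?A j"
      using AE_inj
    proof (rule eventually_mono)
      fix z :: "nat \<Rightarrow> real" assume zinj: "\<forall>i\<in>{..<n}. \<forall>j\<in>{..<n}. i \<noteq> j \<longrightarrow> z i \<noteq> z j"
      show "z \<in> R -` ?A j' \<inter> space (PP l n) \<longleftrightarrow> z \<in> ?A j"
      proof (cases "z \<in> space (PP l n)")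
        case False then show ?thesis by simp
      next
        case True
        have Rz: "R z \<in> space (PP l n)" using Rm True by (rule measurable_space)
        have fT: "finite T" "T \<noteq> {}" using T j finite_subset by auto
        define m where "m = arg_max_on z T"
        have mT: "m \<in> T" using arg_max_on_in[OF fT] by (simp add: m_def)
        have mmax: "z y \<le> z m" if "y \<in> T" for y using arg_max_on_max[OF fT that] by (simp add: m_def)
        have RzT: "R z y = z (s y)" if "y \<in> T" for y using that T by (auto simp: R_def)
        have "arg_max_on (R z) T = s m"
        proof (rule arg_max_on_unique)
          show "s m \<in> T" using mT sT by simp
          show "\<forall>y\<in>T. R z y \<le> R z (s m)"
          proof
            fix y assume y: "y \<in> T"
            have "R z (s m) = z m" using RzT[of "s m"] mT sT ss by simp
            moreover have "R z y = z (s y)" using RzT[OF y] .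
            moreover have "z (s y) \<le> z m" using mmax sT y by simp
            ultimately show "R z y \<le> R z (s m)" by simp
          qed
          show "inj_on (R z) T"
          proof (rule inj_onI)
            fix a b assume a: "a \<in> T" and b: "b \<in> T" and e: "R z a = R z b"
            then have e': "z (s a) = z (s b)" using RzT by simp
            have "s a \<in> {..<n}" "s b \<in> {..<n}" using a b sT T by blast+
            then have "s a = s b" using zinj e' by blast
            then have "s (s a) = s (s b)" by simp
            then show "a = b" using ss by simp
          qed
        qed
        moreover have "s m = j' \<longleftrightarrow> m = j"
          using ss sj by metis
        ultimately show ?thesis using True Rz by (simp add: m_def)
      qed
    qed
  qed
  finally show ?thesis .
qed

lemma am_unif:
  assumes T: "T \<subseteq> {..<n}" and j: "j \<in> T"
  shows "measure (PP l n) {z\<in>space (PP l n). arg_max_on z T = j} = 1 / real (card T)"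
proof -
  interpret P: prob_space "PP l n" by (rule PP_prob[OF l])
  have fT: "finite T" "T \<noteq> {}" using T j finite_subset by auto
  let ?A = "\<lambda>j. {z\<in>space (PP l n). arg_max_on z T = j}"
  have "space (PP l n) = (\<Union>i\<in>T. ?A i)" using arg_max_on_in[OF fT] by auto
  then have "1 = measure (PP l n) (\<Union>i\<in>T. ?A i)" using P.prob_space by simp
  also have "\<dots> = (\<Sum>i\<in>T. measure (PP l n) (?A i))"
    by (rule measure_finite_Union) (use fT am_sets[OF T] in \<open>auto simp: disjoint_family_on_def\<close>)
  also have "\<dots> = (\<Sum>i\<in>T. measure (PP l n) (?A j))"
    by (rule sum.cong[OF refl]) (rule am_sym[OF T j])
  also have "\<dots> = real (card T) * measure (PP l n) (?A j)" by simp
  finally have "real (card T) * measure (PP l n) (?A j) = 1" by simp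
  moreover have "card T > 0" using fT by (simp add: card_gt_0_iff)
  ultimately show ?thesis by (simp add: field_simps)
qed

lemma am_key:
  assumes T: "T \<subseteq> {..<n}" and ne: "T \<noteq> {}"
  shows "emeasure (PP l n) {z\<in>space (PP l n). omega (arg_max_on z T) \<in> A}
         = ennreal (real (card {j\<in>T. omega j \<in> A}) / real (card T))"
proof -
  interpret P: prob_space "PP l n" by (rule PP_prob[OF l])
  have fT: "finite T" using T finite_subset by auto
  let ?A = "\<lambda>j. {z\<in>space (PP l n). arg_max_on z T = j}"
  let ?J = "{j\<in>T. omega j \<in> A}"
  have fJ: "finite ?J" using fT by simp
  have "{z\<in>space (PP l n). omega (arg_max_on z T) \<in> A} = (\<Union>j\<in>?J. ?A j)"
    using arg_max_on_in[OF fT ne] by auto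
  then have "measure (PP l n) {z\<in>space (PP l n). omega (arg_max_on z T) \<in> A} = measure (PP l n) (\<Union>j\<in>?J. ?A j)"
    by simp
  also have "\<dots> = (\<Sum>j\<in>?J. measure (PP l n) (?A j))"
    by (rule measure_finite_Union) (use fJ am_sets[OF T] in \<open>auto simp: disjoint_family_on_def\<close>)
  also have "\<dots> = (\<Sum>j\<in>?J. 1 / real (card T))"
    by (rule sum.cong[OF refl]) (rule am_unif[OF T], simp)
  also have "\<dots> = real (card ?J) / real (card T)" by simp
  finally show ?thesis by (simp add: P.emeasure_eq_measure)
qed

end


lemma emeasure_F:
  fixes omega :: "nat \<Rightarrow> 'o"
  assumes fT: "finite T" and ne: "T \<noteq> {}"
  shows "emeasure (distr (uniform_measure (count_space UNIV) T) (count_space UNIV) omega) A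
         = ennreal (real (card {j\<in>T. omega j \<in> A}) / real (card T))"
proof -
  have om: "omega \<in> measurable (uniform_measure (count_space UNIV) T) (count_space UNIV)"
    by (subst measurable_cong_sets[OF sets_uniform_measure refl]) simp
  have "emeasure (distr (uniform_measure (count_space UNIV) T) (count_space UNIV) omega) A
      = emeasure (uniform_measure (count_space UNIV) T) (omega -` A \<inter> UNIV)"
    using emeasure_distr[OF om, of A] by simp
  also have "\<dots> = emeasure (count_space UNIV) (T \<inter> (omega -` A \<inter> UNIV)) / emeasure (count_space UNIV) T"
    by (rule emeasure_uniform_measure) simp_all
  also have "T \<inter> (omega -` A \<inter> UNIV) = {j\<in>T. omega j \<in> A}" by auto
  also have "emeasure (count_space UNIV) {j\<in>T. omega j \<in> A} / emeasure (count_space UNIV) T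
      = of_nat (card {j\<in>T. omega j \<in> A}) / of_nat (card T)"
    using fT by simp
  also have "\<dots> = ennreal (real (card {j\<in>T. omega j \<in> A}) / real (card T))"
    using fT ne by (simp add: ennreal_of_nat_eq_real_of_nat divide_ennreal card_gt_0_iff)
  finally show ?thesis .
qed

lemma subprob_F:
  fixes omega :: "nat \<Rightarrow> 'o"
  assumes fT: "finite T"
  shows "distr (uniform_measure (count_space UNIV) T) (count_space UNIV) omega \<in> space (subprob_algebra (count_space UNIV))"
proof -
  let ?M = "distr (uniform_measure (count_space UNIV) T) (count_space UNIV) omega"
  have "emeasure ?M (space ?M) \<le> 1"
  proof (cases "T = {}")
    case True
    have om: "omega \<in> measurable (uniform_measure (count_space UNIV) T) (count_space UNIV)"
      by (subst measurable_cong_sets[OF sets_uniform_measure refl]) simp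
    have "emeasure ?M (space ?M) = emeasure (uniform_measure (count_space UNIV) T) (omega -` UNIV \<inter> UNIV)"
      using emeasure_distr[OF om, of UNIV] by simp
    also have "\<dots> = emeasure (count_space UNIV) (T \<inter> (omega -` UNIV \<inter> UNIV)) / emeasure (count_space UNIV) T"
      by (rule emeasure_uniform_measure) simp_all
    also have "\<dots> = 0" using True by simp
    finally show ?thesis by simp
  next
    case False
    have "emeasure ?M (space ?M) = ennreal (real (card {j\<in>T. omega j \<in> UNIV}) / real (card T))"
      using emeasure_F[OF fT False, of omega UNIV] by simp
    also have "\<dots> \<le> 1" by simp
    finally show ?thesis .
  qed
  then have "subprob_space ?M" by (intro subprob_spaceI) simp_all
  then show ?thesis by (simp add: space_subprob_algebra)
qed

lemma arg_max_on_shift: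
  fixes z :: "'a \<Rightarrow> real"
  shows "arg_max_on (\<lambda>i. c + z i) T = arg_max_on z T"
  unfolding arg_max_on_SOME by simp



theorem lemma2:
  fixes q :: "'d \<Rightarrow> 'o \<Rightarrow> real" and D :: 'd and omega :: "nat \<Rightarrow> 'o"
    and k :: nat and Delta eps :: real and adj :: "'d \<Rightarrow> 'd \<Rightarrow> bool"
  assumes "k > 0"
    and "inj_on omega {..<k}"
    and "Delta > 0"
    and "\<And>D1 D2 w. adj D1 D2 \<Longrightarrow> \<bar>q D1 w - q D2 w\<bar> \<le> Delta"
    and "eps > 0"
  shows "alg_A q D omega k Delta eps = alg_B q D omega k Delta eps"
proof -
  define lam where "lam = eps / (2 * Delta)"
  have l: "0 < lam" using assms by (simp add: lam_def)
  let ?P = "PP lam k"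
  interpret P: prob_space ?P by (rule PP_prob[OF l])
  interpret P2: pair_sigma_finite ?P ?P by unfold_locales
  define qs where "qs = qstar q D omega k"
  define Q where "Q = (\<lambda>i. q D (omega i))"
  have fin: "finite ((\<lambda>i. q D (omega i)) ` {..<k})" "(\<lambda>i. q D (omega i)) ` {..<k} \<noteq> {}"
    using assms(1) by auto
  have qmax: "Q i \<le> qs" if "i < k" for i
    unfolding Q_def qs_def qstar_def using fin that by (intro Max_ge) auto
  obtain i0 where i0: "i0 < k" "Q i0 = qs"
    using Max_in[OF fin] unfolding Q_def qs_def qstar_def by auto
  define S where "S = (\<lambda>X::nat\<Rightarrow>real. {i\<in>{..<k}. qs \<le> Q i + X i})"
  define F where "F = (\<lambda>T. distr (uniform_measure (count_space UNIV) T) (count_space UNIV) omega)"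
  define h where "h = (\<lambda>(X::nat\<Rightarrow>real, z::nat\<Rightarrow>real). omega (arg_max_on (\<lambda>i. min qs (Q i + X i) + z i)
                         {i\<in>{..<k}. min qs (Q i + X i) = qs}))"
  have A_eq: "alg_A q D omega k Delta eps = ?P \<bind> (\<lambda>X. F (S X))"
    by (simp add: alg_A_def lam_def qs_def S_def F_def Q_def Let_def)
  have B_eq: "alg_B q D omega k Delta eps = distr (?P \<Otimes>\<^sub>M ?P) (count_space UNIV) h"
    by (simp add: alg_B_def lam_def qs_def h_def Q_def Let_def)
  have Sm: "S \<in> measurable ?P (count_space (Pow {..<k}))"
  proof (rule meas_finite_set)
    fix i assume i: "i \<in> {..<k}"
    have "(\<lambda>X. Q i + X i) \<in> borel_measurable ?P"
      using i by (intro borel_measurable_add borel_measurable_const comp_meas[OF l]) auto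
    then have "{X\<in>space ?P. (\<lambda>_. qs) X \<le> Q i + X i} \<in> sets ?P"
      by (intro borel_measurable_le borel_measurable_const)
    moreover have "{X\<in>space ?P. i \<in> S X} = {X\<in>space ?P. (\<lambda>_. qs) X \<le> Q i + X i}"
      using i by (auto simp: S_def)
    ultimately show "{X\<in>space ?P. i \<in> S X} \<in> sets ?P" by simp
  qed (auto simp: S_def)
  have Fm: "F \<in> measurable (count_space (Pow {..<k})) (subprob_algebra (count_space UNIV))"
    using subprob_F[of _ omega] finite_subset unfolding F_def
    by (auto simp: measurable_count_space_eq1)
  have fm: "(\<lambda>X. F (S X)) \<in> measurable ?P (subprob_algebra (count_space UNIV))"
    by (rule measurable_compose[OF Sm Fm])
  let ?PP = "?P \<Otimes>\<^sub>M ?P"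
  define a where "a = (\<lambda>y (p::(nat\<Rightarrow>real)\<times>(nat\<Rightarrow>real)). min qs (Q y + fst p y))"
  define b where "b = (\<lambda>y p. a y p + snd p y)"
  define G where "G = (\<lambda>p. {i\<in>{..<k}. a i p = qs \<and> (\<forall>y\<in>{..<k}. a y p = qs \<longrightarrow> b y p \<le> b i p)})"
  have fstm: "(\<lambda>p. fst p y) \<in> borel_measurable ?PP" if "y < k" for y
    by (rule measurable_fst''[OF comp_meas[OF l that]])
  have sndm: "(\<lambda>p. snd p y) \<in> borel_measurable ?PP" if "y < k" for y
    by (rule measurable_snd''[OF comp_meas[OF l that]])
  have am: "a y \<in> borel_measurable ?PP" if "y < k" for y
    unfolding a_def using fstm[OF that]
    by (intro borel_measurable_min borel_measurable_add borel_measurable_const) auto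
  have bm: "b y \<in> borel_measurable ?PP" if "y < k" for y
    unfolding b_def using am[OF that] sndm[OF that] by (intro borel_measurable_add) auto
  have apred: "Measurable.pred ?PP (\<lambda>p. a y p = qs)" if "y < k" for y
    unfolding pred_def using am[OF that] by (intro borel_measurable_eq borel_measurable_const)
  have bpred: "Measurable.pred ?PP (\<lambda>p. b y p \<le> b i p)" if "y < k" "i < k" for y i
    unfolding pred_def using bm[OF that(1)] bm[OF that(2)] by (intro borel_measurable_le)
  have Gm: "G \<in> measurable ?PP (count_space (Pow {..<k}))"
  proof (rule meas_finite_set)
    fix i assume i: "i \<in> {..<k}"
    have "Measurable.pred ?PP (\<lambda>p. a i p = qs \<and> (\<forall>y\<in>{..<k}. a y p = qs \<longrightarrow> b y p \<le> b i p))"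
    proof (rule pred_intros_logic(3))
      show "Measurable.pred ?PP (\<lambda>p. a i p = qs)" using i by (intro apred) auto
      show "Measurable.pred ?PP (\<lambda>p. \<forall>y\<in>{..<k}. a y p = qs \<longrightarrow> b y p \<le> b i p)"
      proof (rule pred_intros_finite(3))
        fix y assume y: "y \<in> {..<k}"
        show "Measurable.pred ?PP (\<lambda>p. a y p = qs \<longrightarrow> b y p \<le> b i p)"
          using i y by (intro pred_intros_logic(4) apred bpred) auto
      qed simp
    qed
    then have "{p\<in>space ?PP. a i p = qs \<and> (\<forall>y\<in>{..<k}. a y p = qs \<longrightarrow> b y p \<le> b i p)} \<in> sets ?PP"
      by (rule predE)
    moreover have "{p\<in>space ?PP. i \<in> G p} = {p\<in>space ?PP. a i p = qs \<and> (\<forall>y\<in>{..<k}. a y p = qs \<longrightarrow> b y p \<le> b i p)}"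
      using i by (auto simp: G_def)
    ultimately show "{p\<in>space ?PP. i \<in> G p} \<in> sets ?PP" by simp
  qed (auto simp: G_def)
  have h_eq: "h = (\<lambda>p. omega ((\<lambda>M. SOME x. x \<in> M) (G p)))"
  proof
    fix p :: "(nat\<Rightarrow>real)\<times>(nat\<Rightarrow>real)"
    obtain X z where p: "p = (X, z)" by (cases p)
    have "{x \<in> {i\<in>{..<k}. min qs (Q i + X i) = qs}. \<forall>y\<in>{i\<in>{..<k}. min qs (Q i + X i) = qs}.
            min qs (Q y + X y) + z y \<le> min qs (Q x + X x) + z x} = G (X, z)"
      by (auto simp: G_def a_def b_def)
    then have "h (X, z) = omega ((\<lambda>M. SOME x. x \<in> M) (G (X, z)))"
      by (simp only: h_def case_prod_conv arg_max_on_SOME)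
    then show "h p = omega ((\<lambda>M. SOME x. x \<in> M) (G p))" by (simp only: p)
  qed
  have OF: "(\<lambda>M. omega (SOME x. x \<in> M)) \<in> measurable (count_space (Pow {..<k})) (count_space UNIV)"
    by simp
  have hm: "h \<in> measurable ?PP (count_space UNIV)"
    unfolding h_eq using measurable_compose[OF Gm OF] by simp
  have AEpos: "AE X in ?P. \<forall>i\<in>{..<k}. 0 \<le> X i"
  proof (rule AE_finite_allI)
    fix i assume i: "i \<in> {..<k}"
    show "AE X in ?P. 0 \<le> X i"
      by (rule AE_PiM_component[where P="\<lambda>x. 0 \<le> x"]) (use i expo_prob[OF l] expo_AE_nonneg[OF l] in auto)
  qed simp
  have SX: "S X \<subseteq> {..<k}" "finite (S X)" for X by (auto simp: S_def)
  have SXne: "S X \<noteq> {}" if "\<forall>i\<in>{..<k}. 0 \<le> X i" for X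
  proof -
    have "i0 \<in> S X" using i0 that by (auto simp: S_def)
    then show ?thesis by blast
  qed
  have hX: "h (X, z) = omega (arg_max_on z (S X))" for X z
  proof -
    have S'eq: "{i\<in>{..<k}. min qs (Q i + X i) = qs} = S X" by (auto simp: S_def min_def)
    have "arg_max_on (\<lambda>i. min qs (Q i + X i) + z i) (S X) = arg_max_on (\<lambda>i. qs + z i) (S X)"
      by (rule arg_max_on_cong) (auto simp: S_def min_def)
    also have "\<dots> = arg_max_on z (S X)" by (rule arg_max_on_shift)
    finally show ?thesis by (simp only: h_def case_prod_conv S'eq)
  qed
  show ?thesis
  proof (rule measure_eqI)
    show "sets (alg_A q D omega k Delta eps) = sets (alg_B q D omega k Delta eps)"
      unfolding A_eq B_eq
      by (subst sets_bind[where N="count_space UNIV"]) (auto simp: F_def P.not_empty sp_expo[OF l])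
  next
    fix Y assume "Y \<in> sets (alg_A q D omega k Delta eps)"
    have "emeasure (alg_A q D omega k Delta eps) Y = \<integral>\<^sup>+X. emeasure (F (S X)) Y \<partial>?P"
      unfolding A_eq by (rule emeasure_bind[OF P.not_empty fm]) simp
    also have "\<dots> = \<integral>\<^sup>+X. ennreal (real (card {j\<in>S X. omega j \<in> Y}) / real (card (S X))) \<partial>?P"
    proof (rule nn_integral_cong_AE)
      show "AE X in ?P. emeasure (F (S X)) Y = ennreal (real (card {j\<in>S X. omega j \<in> Y}) / real (card (S X)))"
        using AEpos
      proof (rule eventually_mono)
        fix X :: "nat \<Rightarrow> real" assume "\<forall>i\<in>{..<k}. 0 \<le> X i"
        then show "emeasure (F (S X)) Y = ennreal (real (card {j\<in>S X. omega j \<in> Y}) / real (card (S X)))"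
          unfolding F_def by (rule emeasure_F[OF SX(2) SXne])
      qed
    qed
    also have "\<dots> = \<integral>\<^sup>+X. emeasure ?P {z\<in>space ?P. omega (arg_max_on z (S X)) \<in> Y} \<partial>?P"
    proof (rule nn_integral_cong_AE)
      show "AE X in ?P. ennreal (real (card {j\<in>S X. omega j \<in> Y}) / real (card (S X)))
               = emeasure ?P {z\<in>space ?P. omega (arg_max_on z (S X)) \<in> Y}"
        using AEpos
      proof (rule eventually_mono)
        fix X :: "nat \<Rightarrow> real" assume "\<forall>i\<in>{..<k}. 0 \<le> X i"
        then show "ennreal (real (card {j\<in>S X. omega j \<in> Y}) / real (card (S X)))
               = emeasure ?P {z\<in>space ?P. omega (arg_max_on z (S X)) \<in> Y}"
          using am_key[OF l SX(1) SXne, of X omega Y] by simp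
      qed
    qed
    also have "\<dots> = \<integral>\<^sup>+X. emeasure ?P (Pair X -` (h -` Y \<inter> space ?PP)) \<partial>?P"
    proof (rule nn_integral_cong)
      fix X assume X: "X \<in> space ?P"
      have "Pair X -` (h -` Y \<inter> space ?PP) = {z\<in>space ?P. omega (arg_max_on z (S X)) \<in> Y}"
        using X by (auto simp: space_pair_measure hX)
      then show "emeasure ?P {z\<in>space ?P. omega (arg_max_on z (S X)) \<in> Y} = emeasure ?P (Pair X -` (h -` Y \<inter> space ?PP))"
        by simp
    qed
    also have "\<dots> = emeasure ?PP (h -` Y \<inter> space ?PP)"
      by (rule P.emeasure_pair_measure_alt[symmetric]) (rule measurable_sets[OF hm], simp)
    also have "\<dots> = emeasure (alg_B q D omega k Delta eps) Y"
      unfolding B_eq by (rule emeasure_distr[symmetric, OF hm]) simp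
    finally show "emeasure (alg_A q D omega k Delta eps) Y = emeasure (alg_B q D omega k Delta eps) Y" .
  qed
qed

end
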